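(* Let $G$ be a primitive permutation group on a finite set $\Omega$ of size $n>2$. Then (a) $G$ synchronizes every map $f:\Omega\to\Omega$ of rank $2$; (b) $G$ synchronizes every non-uniform map $f:\Omega\to\Omega$ of rank $3$ or $4$.
   Context: The rank of $f$ is $|\Omega f|$. $G$ synchronizes a non-invertible map $f$ if the semigroup $\langle G,f\rangle$ generated by $G$ and $f$ contains a constant map. The kernel of $f$ is the partition of $\Omega$ into the inverse images of points of the image of $f$; $f$ is uniform if all parts of its kernel have the same size, and non-uniform otherwise. *)

theory Defs
  imports "HOL-Combinatorics.Permutations"
begin

definition perm_group_on :: "'a set \<Rightarrow> ('a \<Rightarrow> 'a) set \<Rightarrow> bool" where
  "perm_group_on \<Omega> G \<longleftrightarrow> G \<noteq> {} \<and> (\<forall>g\<in>G. g permutes \<Omega>) \<and>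
     (\<forall>g\<in>G. \<forall>h\<in>G. g \<circ> h \<in> G) \<and> (\<forall>g\<in>G. inv g \<in> G)"

definition transitive_on :: "'a set \<Rightarrow> ('a \<Rightarrow> 'a) set \<Rightarrow> bool" where
  "transitive_on \<Omega> G \<longleftrightarrow> (\<forall>x\<in>\<Omega>. \<forall>y\<in>\<Omega>. \<exists>g\<in>G. g x = y)"

definition primitive_on :: "'a set \<Rightarrow> ('a \<Rightarrow> 'a) set \<Rightarrow> bool" where
  "primitive_on \<Omega> G \<longleftrightarrow> perm_group_on \<Omega> G \<and> transitive_on \<Omega> G \<and>
     (\<forall>R. equiv \<Omega> R \<and> (\<forall>g\<in>G. \<forall>x y. (x, y) \<in> R \<longrightarrow> (g x, g y) \<in> R)
          \<longrightarrow> R = Id_on \<Omega> \<or> R = \<Omega> \<times> \<Omega>)"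

inductive_set gen_semigroup :: "('a \<Rightarrow> 'a) set \<Rightarrow> ('a \<Rightarrow> 'a) \<Rightarrow> ('a \<Rightarrow> 'a) set"
  for G :: "('a \<Rightarrow> 'a) set" and f :: "'a \<Rightarrow> 'a" where
  gen_G: "g \<in> G \<Longrightarrow> g \<in> gen_semigroup G f"
| gen_f: "f \<in> gen_semigroup G f"
| gen_comp: "a \<in> gen_semigroup G f \<Longrightarrow> b \<in> gen_semigroup G f \<Longrightarrow> a \<circ> b \<in> gen_semigroup G f"

definition is_map_on :: "'a set \<Rightarrow> ('a \<Rightarrow> 'a) \<Rightarrow> bool" where
  "is_map_on \<Omega> f \<longleftrightarrow> f ` \<Omega> \<subseteq> \<Omega>"

definition constant_on_set :: "'a set \<Rightarrow> ('a \<Rightarrow> 'a) \<Rightarrow> bool" where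
  "constant_on_set \<Omega> h \<longleftrightarrow> (\<exists>c\<in>\<Omega>. \<forall>x\<in>\<Omega>. h x = c)"

definition map_rank :: "'a set \<Rightarrow> ('a \<Rightarrow> 'a) \<Rightarrow> nat" where
  "map_rank \<Omega> f = card (f ` \<Omega>)"

definition synchronizes :: "'a set \<Rightarrow> ('a \<Rightarrow> 'a) set \<Rightarrow> ('a \<Rightarrow> 'a) \<Rightarrow> bool" where
  "synchronizes \<Omega> G f \<longleftrightarrow> (\<exists>h\<in>gen_semigroup G f. constant_on_set \<Omega> h)"

definition kernel_of :: "'a set \<Rightarrow> ('a \<Rightarrow> 'a) \<Rightarrow> 'a set set" where
  "kernel_of \<Omega> f = (\<lambda>y. {x\<in>\<Omega>. f x = y}) ` (f ` \<Omega>)"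

definition uniform_map :: "'a set \<Rightarrow> ('a \<Rightarrow> 'a) \<Rightarrow> bool" where
  "uniform_map \<Omega> f \<longleftrightarrow> (\<forall>A\<in>kernel_of \<Omega> f. \<forall>B\<in>kernel_of \<Omega> f. card A = card B)"

end

theory Submission imports Defs begin

locale ctx =
  fixes \<Omega> :: "'a set" and G :: "('a \<Rightarrow> 'a) set" and f :: "'a \<Rightarrow> 'a"
  assumes fin: "finite \<Omega>" and prim: "primitive_on \<Omega> G" and fmap: "is_map_on \<Omega> f"
    and ne: "\<Omega> \<noteq> {}"
begin

abbreviation "S \<equiv> gen_semigroup G f"

lemma pg: "perm_group_on \<Omega> G" using prim unfolding primitive_on_def by blast
lemma Gtrans: "x \<in> \<Omega> \<Longrightarrow> y \<in> \<Omega> \<Longrightarrow> \<exists>g\<in>G. g x = y"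
  using prim unfolding primitive_on_def transitive_on_def by blast
lemma blocks: "equiv \<Omega> R \<Longrightarrow> (\<forall>g\<in>G. \<forall>x y. (x, y) \<in> R \<longrightarrow> (g x, g y) \<in> R)
          \<Longrightarrow> R = Id_on \<Omega> \<or> R = \<Omega> \<times> \<Omega>"
  using prim unfolding primitive_on_def by blast
lemma Gne: "G \<noteq> {}" using pg unfolding perm_group_on_def by blast
lemma Gperm: "g \<in> G \<Longrightarrow> g permutes \<Omega>" using pg unfolding perm_group_on_def by blast
lemma Gcomp: "g \<in> G \<Longrightarrow> k \<in> G \<Longrightarrow> g \<circ> k \<in> G" using pg unfolding perm_group_on_def by blast
lemma Gimg: "g \<in> G \<Longrightarrow> g ` \<Omega> = \<Omega>" using Gperm permutes_image by blast
lemma Gmem: "g \<in> G \<Longrightarrow> x \<in> \<Omega> \<Longrightarrow> g x \<in> \<Omega>" using Gimg by blast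
lemma Gbij: "g \<in> G \<Longrightarrow> bij g" using Gperm permutes_bij by blast
lemma Gfin: "finite G"
  by (rule finite_subset[OF _ finite_permutations[OF fin]]) (auto dest: Gperm)

lemma Smem: "s \<in> S \<Longrightarrow> x \<in> \<Omega> \<Longrightarrow> s x \<in> \<Omega>"
proof (induction arbitrary: x rule: gen_semigroup.induct)
  case (gen_G g) then show ?case using Gmem by blast
next
  case gen_f then show ?case using fmap unfolding is_map_on_def by blast
next
  case (gen_comp a b) then show ?case by simp
qed

lemma Simg: "s \<in> S \<Longrightarrow> s ` \<Omega> \<subseteq> \<Omega>" using Smem by blast

lemma Scomp: "a \<in> S \<Longrightarrow> b \<in> S \<Longrightarrow> a \<circ> b \<in> S" by (rule gen_semigroup.gen_comp)
lemma SG: "g \<in> G \<Longrightarrow> g \<in> S" by (rule gen_semigroup.gen_G)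
lemma Sf: "f \<in> S" by (rule gen_semigroup.gen_f)

lemma rank_pos: "card (s ` \<Omega>) \<ge> 1"
  using fin ne by (simp add: Suc_le_eq card_gt_0_iff)

lemma const: "s \<in> S \<Longrightarrow> card (s ` \<Omega>) = 1 \<Longrightarrow> synchronizes \<Omega> G f"
proof -
  assume s: "s \<in> S" and c: "card (s ` \<Omega>) = 1"
  then obtain c where "s ` \<Omega> = {c}" using card_1_singletonE by blast
  moreover have "c \<in> \<Omega>" using Simg[OF s] \<open>s ` \<Omega> = {c}\<close> by auto
  ultimately show ?thesis unfolding synchronizes_def constant_on_set_def using s by blast
qed

lemma stab_card: "a \<in> \<Omega> \<Longrightarrow> k \<in> \<Omega> \<Longrightarrow> a' \<in> \<Omega> \<Longrightarrow> k' \<in> \<Omega> \<Longrightarrow>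
   card {g\<in>G. g a = k} \<le> card {g\<in>G. g a' = k'}"
proof -
  assume a: "a \<in> \<Omega>" "k \<in> \<Omega>" "a' \<in> \<Omega>" "k' \<in> \<Omega>"
  obtain v where v: "v \<in> G" "v a' = a" using Gtrans a by blast
  obtain u where u: "u \<in> G" "u k = k'" using Gtrans a by blast
  have "inj_on (\<lambda>g. u \<circ> g \<circ> v) {g\<in>G. g a = k}"
  proof (rule inj_onI)
    fix g g' assume eq: "u \<circ> g \<circ> v = u \<circ> g' \<circ> v"
    have iu: "inj u" using Gbij[OF u(1)] bij_is_inj by blast
    have sv: "surj v" using Gbij[OF v(1)] bij_is_surj by blast
    show "g = g'"
    proof
      fix x
      obtain y where y: "x = v y" using sv by (metis surjD)
      have "(u \<circ> g \<circ> v) y = (u \<circ> g' \<circ> v) y" using eq by simp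
      then have "u (g x) = u (g' x)" using y by simp
      then show "g x = g' x" by (rule injD[OF iu])
    qed
  qed
  moreover have "(\<lambda>g. u \<circ> g \<circ> v) ` {g\<in>G. g a = k} \<subseteq> {g\<in>G. g a' = k'}"
    using u v Gcomp by auto
  ultimately show ?thesis by (rule card_inj_on_le) (use Gfin in auto)
qed

lemma stab_eq: "a \<in> \<Omega> \<Longrightarrow> k \<in> \<Omega> \<Longrightarrow> a' \<in> \<Omega> \<Longrightarrow> k' \<in> \<Omega> \<Longrightarrow>
   card {g\<in>G. g a = k} = card {g\<in>G. g a' = k'}"
  using stab_card[of a k a' k'] stab_card[of a' k' a k] by linarith

lemma count_sum: "finite A \<Longrightarrow> card {x\<in>A. P x} = (\<Sum>x\<in>A. if P x then 1 else 0)"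
  by (simp add: sum.inter_filter[symmetric])


lemma orbit_count: "a \<in> \<Omega> \<Longrightarrow> card G = card \<Omega> * card {g\<in>G. g a = a}"
proof -
  assume a: "a \<in> \<Omega>"
  have "card G = (\<Sum>g\<in>G. 1)" by (rule card_eq_sum)
  also have "\<dots> = (\<Sum>g\<in>G. \<Sum>k\<in>\<Omega>. if g a = k then 1 else 0)"
    by (rule sum.cong[OF refl]) (simp add: fin Gmem[OF _ a])
  also have "\<dots> = (\<Sum>k\<in>\<Omega>. \<Sum>g\<in>G. if g a = k then 1 else 0)" by (rule sum.swap)
  also have "\<dots> = (\<Sum>k\<in>\<Omega>. card {g\<in>G. g a = a})"
    by (rule sum.cong[OF refl]) (simp add: count_sum[OF Gfin, symmetric] stab_eq[OF a _ a a])
  finally show ?thesis by simp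
qed

lemma uniform:
  assumes s: "s \<in> S" and mn: "\<forall>t\<in>S. card (s ` \<Omega>) \<le> card (t ` \<Omega>)" and y: "y \<in> s ` \<Omega>"
  shows "card (s ` \<Omega>) * card {x\<in>\<Omega>. s x = y} = card \<Omega>"
proof -
  define A where "A = s ` \<Omega>"
  define K where "K = {x\<in>\<Omega>. s x = y}"
  have Afin: "finite A" using fin A_def by simp
  have Kfin: "finite K" using fin K_def by simp
  have AO: "A \<subseteq> \<Omega>" using Simg[OF s] A_def by simp
  have KO: "K \<subseteq> \<Omega>" using K_def by auto
  obtain a0 where a0: "a0 \<in> \<Omega>" using ne by blast
  define m where "m = card {g\<in>G. g a0 = a0}"
  have one: "card {a\<in>A. g a \<in> K} = 1" if g: "g \<in> G" for g
  proof -
    have sgs: "s \<circ> g \<circ> s \<in> S" using s SG[OF g] Scomp by blast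
    have img: "(s \<circ> g \<circ> s) ` \<Omega> = (s \<circ> g) ` A" using A_def by (simp add: image_comp)
    have sub: "(s \<circ> g) ` A \<subseteq> A" using AO Gmem[OF g] A_def by auto
    have "card A \<le> card ((s \<circ> g) ` A)" using mn sgs img A_def by metis
    hence eq: "(s \<circ> g) ` A = A"
      using card_subset_eq[OF Afin sub] card_image_le[OF Afin, of "s \<circ> g"] by auto
    hence inj: "inj_on (s \<circ> g) A" using eq_card_imp_inj_on[OF Afin, of "s \<circ> g"] by simp
    obtain a1 where a1: "a1 \<in> A" "s (g a1) = y" using eq y A_def by (metis comp_apply imageE)
    have "{a\<in>A. g a \<in> K} = {a1}"
    proof safe
      fix a assume "a \<in> A" "g a \<in> K"
      then show "a = a1" using inj a1 K_def by (auto simp: inj_on_def)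
    next
      show "a1 \<in> A" by fact
      show "g a1 \<in> K" using a1 AO Gmem[OF g] K_def by auto
    qed
    then show ?thesis by simp
  qed
  have "card G = (\<Sum>g\<in>G. card {a\<in>A. g a \<in> K})" using one by simp
  also have "\<dots> = (\<Sum>g\<in>G. \<Sum>a\<in>A. \<Sum>k\<in>K. if g a = k then 1 else 0)"
    by (rule sum.cong[OF refl]) (simp add: count_sum[OF Afin] Kfin)
  also have "\<dots> = (\<Sum>a\<in>A. \<Sum>k\<in>K. \<Sum>g\<in>G. if g a = k then 1 else 0)"
    by (subst sum.swap) (simp add: sum.swap[of _ G K])
  also have "\<dots> = (\<Sum>a\<in>A. \<Sum>k\<in>K. m)"
    using AO KO by (intro sum.cong refl)
      (simp add: count_sum[OF Gfin, symmetric] m_def stab_eq[OF _ _ a0 a0] subset_iff)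
  also have "\<dots> = card A * card K * m" by simp
  finally have 1: "card G = card A * card K * m" .
  have 2: "card G = card \<Omega> * m" using orbit_count[OF a0] m_def by simp
  have "m > 0" using Gtrans[OF a0 a0] Gfin unfolding m_def by (auto simp: card_gt_0_iff)
  with 1 2 have "card A * card K = card \<Omega>" by (metis mult_right_cancel not_gr0)
  then show ?thesis using A_def K_def by simp
qed


definition Rel :: "('a \<Rightarrow> 'a) \<Rightarrow> ('a \<times> 'a) set" where
  "Rel h = {(x,y). x \<in> \<Omega> \<and> y \<in> \<Omega> \<and> (\<forall>g\<in>G. h (g x) = h (g y))}"

lemma Rel_block: "Rel h = Id_on \<Omega> \<or> Rel h = \<Omega> \<times> \<Omega>"
proof (rule blocks)
  show "equiv \<Omega> (Rel h)"
    unfolding equiv_def refl_on_def sym_def trans_def Rel_def by auto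
  show "\<forall>g\<in>G. \<forall>x y. (x, y) \<in> Rel h \<longrightarrow> (g x, g y) \<in> Rel h"
  proof (intro ballI allI impI)
    fix k x y assume k: "k \<in> G" and xy: "(x, y) \<in> Rel h"
    have "\<forall>g\<in>G. h (g (k x)) = h (g (k y))"
    proof
      fix g assume "g \<in> G"
      then have "g \<circ> k \<in> G" using Gcomp k by blast
      then show "h (g (k x)) = h (g (k y))" using xy unfolding Rel_def by fastforce
    qed
    then show "(k x, k y) \<in> Rel h" using xy Gmem[OF k] unfolding Rel_def by auto
  qed
qed

lemma Rel_full_contra: assumes "card (h ` \<Omega>) \<ge> 2" "Rel h = \<Omega> \<times> \<Omega>" shows False
proof -
  obtain g0 where g0: "g0 \<in> G" using Gne by blast
  obtain x0 where x0: "x0 \<in> \<Omega>" using ne by blast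
  have "h ` \<Omega> \<subseteq> {h x0}"
  proof
    fix z assume "z \<in> h ` \<Omega>"
    then obtain x where x: "x \<in> \<Omega>" "z = h x" by blast
    then obtain x' where x': "x' \<in> \<Omega>" "x = g0 x'" using Gimg[OF g0] by blast
    obtain y' where y': "y' \<in> \<Omega>" "x0 = g0 y'" using Gimg[OF g0] x0 by blast
    have "(x', y') \<in> Rel h" using assms(2) x' y' by simp
    then show "z \<in> {h x0}" using g0 x x' y' unfolding Rel_def by auto
  qed
  then have "card (h ` \<Omega>) \<le> card {h x0}" by (intro card_mono) auto
  then have "card (h ` \<Omega>) \<le> 1" by simp
  then show False using assms(1) by simp
qed

lemma exmin: "\<exists>h\<in>S. \<forall>t\<in>S. card (h ` \<Omega>) \<le> card (t ` \<Omega>)"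
  using ex_has_least_nat[of "\<lambda>s. s \<in> S" f "\<lambda>s. card (s ` \<Omega>)"] Sf by blast

lemma no_rank2:
  assumes h: "h \<in> S" and mn: "\<forall>t\<in>S. card (h ` \<Omega>) \<le> card (t ` \<Omega>)"
    and c2: "card (h ` \<Omega>) = 2" and big: "card \<Omega> > 2"
  shows False
proof -
  have "Rel h \<noteq> \<Omega> \<times> \<Omega>" using Rel_full_contra[of h] c2 by (metis order_refl)
  then have R: "Rel h = Id_on \<Omega>" using Rel_block[of h] by blast
  obtain a b where ab: "h ` \<Omega> = {a, b}" "a \<noteq> b" using c2 unfolding card_2_iff by blast
  have abO: "a \<in> \<Omega>" "b \<in> \<Omega>" using ab Simg[OF h] by auto
  have sep: "h (g a) \<noteq> h (g b)" if g: "g \<in> G" for g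
  proof
    assume eq: "h (g a) = h (g b)"
    have "h \<circ> g \<circ> h \<in> S" using h SG[OF g] Scomp by blast
    moreover have "(h \<circ> g \<circ> h) ` \<Omega> = (h \<circ> g) ` (h ` \<Omega>)" by (simp add: image_comp)
    then have "(h \<circ> g \<circ> h) ` \<Omega> = {h (g a)}" using ab eq by simp
    ultimately show False using mn c2 by fastforce
  qed
  define E where "E = {(k a, k b) | k. k \<in> G} \<union> {(k b, k a) | k. k \<in> G}"
  have Eprop: "u \<in> \<Omega> \<and> v \<in> \<Omega> \<and> (\<forall>g\<in>G. h (g u) \<noteq> h (g v))" if uv: "(u, v) \<in> E" for u v
  proof -
    obtain k where k: "k \<in> G" "(u = k a \<and> v = k b) \<or> (u = k b \<and> v = k a)"
      using uv unfolding E_def by blast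
    have "\<forall>g\<in>G. h (g (k a)) \<noteq> h (g (k b))"
      using sep Gcomp[OF _ k(1)] by (metis comp_apply)
    then show ?thesis using k abO Gmem by metis
  qed
  have Esym: "(v, u) \<in> E" if "(u, v) \<in> E" for u v using that unfolding E_def by blast
  have deg: "x = z" if yx: "(y, x) \<in> E" "(y, z) \<in> E" for x y z
  proof -
    have "(x, z) \<in> Rel h"
      unfolding Rel_def
    proof (safe)
      show "x \<in> \<Omega>" "z \<in> \<Omega>" using Eprop yx by auto
      fix g assume g: "g \<in> G"
      have "h (g x) \<in> {a,b}" "h (g y) \<in> {a,b}" "h (g z) \<in> {a,b}"
        using ab(1) Eprop yx Gmem[OF g] by (metis imageI)+
      moreover have "h (g y) \<noteq> h (g x)" "h (g y) \<noteq> h (g z)" using Eprop yx g by auto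
      ultimately show "h (g x) = h (g z)" by auto
    qed
    then show ?thesis using R by auto
  qed
  define M where "M = Id_on \<Omega> \<union> E"
  have eqM: "equiv \<Omega> M"
    unfolding equiv_def refl_on_def sym_def trans_def
  proof (intro conjI allI impI)
    show "M \<subseteq> \<Omega> \<times> \<Omega>" using Eprop unfolding M_def by auto
    show "\<forall>x\<in>\<Omega>. (x, x) \<in> M" unfolding M_def by auto
    fix x y assume "(x, y) \<in> M" then show "(y, x) \<in> M" using Esym unfolding M_def by auto
  next
    fix x y z assume "(x, y) \<in> M" "(y, z) \<in> M"
    then show "(x, z) \<in> M" unfolding M_def using Esym deg Eprop by (auto simp: Id_on_def)
  qed
  have invM: "\<forall>g\<in>G. \<forall>x y. (x, y) \<in> M \<longrightarrow> (g x, g y) \<in> M"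
  proof (intro ballI allI impI)
    fix g x y assume g: "g \<in> G" and xy: "(x, y) \<in> M"
    show "(g x, g y) \<in> M"
    proof (cases "(x, y) \<in> E")
      case True
      then obtain k where k: "k \<in> G" "(x = k a \<and> y = k b) \<or> (x = k b \<and> y = k a)"
        unfolding E_def by blast
      have "g \<circ> k \<in> G" using Gcomp g k by blast
      then have "(g x, g y) \<in> E" using k unfolding E_def by auto
      then show ?thesis unfolding M_def by blast
    next
      case False
      then show ?thesis using xy Gmem[OF g] unfolding M_def by auto
    qed
  qed
  obtain g0 where g0: "g0 \<in> G" using Gne by blast
  have e0: "(g0 a, g0 b) \<in> E" using g0 unfolding E_def by blast
  have ne0: "g0 a \<noteq> g0 b" using sep[OF g0] by auto
  have "\<not> \<Omega> \<subseteq> {g0 a, g0 b}"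
  proof
    assume "\<Omega> \<subseteq> {g0 a, g0 b}"
    then have "card \<Omega> \<le> card {g0 a, g0 b}" by (intro card_mono) auto
    also have "\<dots> \<le> 2" by (simp add: card_insert_le_m1)
    finally show False using big by simp
  qed
  then obtain c where c: "c \<in> \<Omega>" "c \<noteq> g0 a" "c \<noteq> g0 b" by blast
  have "M \<noteq> Id_on \<Omega>" using e0 ne0 unfolding M_def by (metis Id_onE UnI2 prod.inject)
  moreover have "M \<noteq> \<Omega> \<times> \<Omega>"
  proof
    assume "M = \<Omega> \<times> \<Omega>"
    then have "(g0 a, c) \<in> M" using c Eprop[OF e0] by auto
    then show False using c deg[OF e0] unfolding M_def by auto
  qed
  ultimately show False using blocks[OF eqM invM] by blast
qed


lemma min_uniform:
  assumes mn: "\<forall>t\<in>S. card (f ` \<Omega>) \<le> card (t ` \<Omega>)"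
  shows "uniform_map \<Omega> f"
proof -
  have pos: "card (f ` \<Omega>) > 0" using rank_pos[of f] by simp
  have "card {x\<in>\<Omega>. f x = y} = card {x\<in>\<Omega>. f x = y'}" if "y \<in> f ` \<Omega>" "y' \<in> f ` \<Omega>" for y y'
    using uniform[OF Sf mn that(1)] uniform[OF Sf mn that(2)] pos by (metis mult_left_cancel not_gr0)
  then show ?thesis unfolding uniform_map_def kernel_of_def by blast
qed

lemma no_rank4:
  assumes h: "h \<in> S" and mn: "\<forall>t\<in>S. card (h ` \<Omega>) \<le> card (t ` \<Omega>)"
    and c3: "card (h ` \<Omega>) = 3" and c4: "card (f ` \<Omega>) = 4"
  shows False
proof -
  define C where "C = f ` \<Omega>"
  have Cfin: "finite C" using fin C_def by simp
  have CO: "C \<subseteq> \<Omega>" using Simg[OF Sf] C_def by simp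
  have sgS: "h \<circ> g \<circ> f \<in> S" if "g \<in> G" for g using h SG[OF that] Sf Scomp by blast
  have imgC: "(h \<circ> g \<circ> f) ` \<Omega> = (h \<circ> g) ` C" for g using C_def by (simp add: image_comp)
  have sg3: "card ((h \<circ> g) ` C) = 3" if g: "g \<in> G" for g
  proof -
    have "(h \<circ> g) ` C \<subseteq> h ` \<Omega>" using CO Gmem[OF g] by auto
    then have "card ((h \<circ> g) ` C) \<le> 3" using c3 card_mono fin by (metis finite_imageI)
    moreover have "3 \<le> card ((h \<circ> g) ` C)" using mn sgS[OF g] imgC c3 by metis
    ultimately show ?thesis by simp
  qed
  have sgmin: "\<forall>t\<in>S. card ((h \<circ> g \<circ> f) ` \<Omega>) \<le> card (t ` \<Omega>)" if g: "g \<in> G" for g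
    using sg3[OF g] imgC mn c3 by metis
  have cls: "3 * card {x\<in>\<Omega>. h (g (f x)) = h (g c)} = card \<Omega>" if g: "g \<in> G" and c: "c \<in> C" for g c
  proof -
    have "h (g c) \<in> (h \<circ> g \<circ> f) ` \<Omega>" using imgC c by auto
    from uniform[OF sgS[OF g] sgmin[OF g] this] show ?thesis using sg3[OF g] imgC by simp
  qed
  define w where "w c = card {x\<in>\<Omega>. f x = c}" for c
  have key: "(\<exists>c'\<in>C. c' \<noteq> c \<and> h (g c') = h (g c)) \<longleftrightarrow> 3 * w c < card \<Omega>"
    if g: "g \<in> G" and c: "c \<in> C" for g c
  proof
    assume "\<exists>c'\<in>C. c' \<noteq> c \<and> h (g c') = h (g c)"
    then obtain c' where c': "c' \<in> C" "c' \<noteq> c" "h (g c') = h (g c)" by blast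
    obtain x' where x': "x' \<in> \<Omega>" "f x' = c'" using c' C_def by blast
    have sub: "{x\<in>\<Omega>. f x = c} \<subset> {x\<in>\<Omega>. h (g (f x)) = h (g c)}"
      using x' c' by auto
    have "w c < card {x\<in>\<Omega>. h (g (f x)) = h (g c)}"
      unfolding w_def by (rule psubset_card_mono) (use fin sub in auto)
    then show "3 * w c < card \<Omega>" using cls[OF g c] by linarith
  next
    assume lt: "3 * w c < card \<Omega>"
    show "\<exists>c'\<in>C. c' \<noteq> c \<and> h (g c') = h (g c)"
    proof (rule ccontr)
      assume "\<not> ?thesis"
      then have "{x\<in>\<Omega>. h (g (f x)) = h (g c)} = {x\<in>\<Omega>. f x = c}" using C_def by auto
      then show False using cls[OF g c] lt w_def by simp
    qed
  qed
  obtain g0 where g0: "g0 \<in> G" using Gne by blast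
  have "\<not> inj_on (h \<circ> g0) C"
  proof
    assume "inj_on (h \<circ> g0) C"
    then have "card ((h \<circ> g0) ` C) = 4" using card_image c4 C_def by metis
    then show False using sg3[OF g0] by simp
  qed
  then obtain p q where pq: "p \<in> C" "q \<in> C" "p \<noteq> q" "h (g0 p) = h (g0 q)"
    unfolding inj_on_def by auto
  have Pp: "\<exists>c'\<in>C. c' \<noteq> p \<and> h (g c') = h (g p)" if g: "g \<in> G" for g
    using key[OF g pq(1)] key[OF g0 pq(1)] pq by metis
  have Pq: "\<exists>c'\<in>C. c' \<noteq> q \<and> h (g c') = h (g q)" if g: "g \<in> G" for g
    using key[OF g pq(2)] key[OF g0 pq(2)] pq by metis
  have same: "h (g p) = h (g q)" if g: "g \<in> G" for g
  proof (rule ccontr)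
    assume neq: "h (g p) \<noteq> h (g q)"
    obtain p' where p': "p' \<in> C" "p' \<noteq> p" "h (g p') = h (g p)" using Pp[OF g] by blast
    obtain q' where q': "q' \<in> C" "q' \<noteq> q" "h (g q') = h (g q)" using Pq[OF g] by blast
    have d: "p \<noteq> q'" "p' \<noteq> q" "p' \<noteq> q'" using p' q' neq by metis+
    have "card {p, p', q, q'} = 4" using d p'(2) q'(2) pq(3) by simp
    moreover have sub: "{p, p', q, q'} \<subseteq> C" using p' q' pq by auto
    ultimately have "{p, p', q, q'} = C" using card_subset_eq[OF Cfin sub] c4 C_def by simp
    then have "(h \<circ> g) ` C = {h (g p), h (g q)}" using p' q' by auto
    then have "card ((h \<circ> g) ` C) \<le> 2" by (simp add: card_insert_le_m1)
    then show False using sg3[OF g] by simp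
  qed
  have "(p, q) \<in> Rel h" using same pq CO unfolding Rel_def by auto
  then have "Rel h \<noteq> Id_on \<Omega>" using pq by auto
  then have "Rel h = \<Omega> \<times> \<Omega>" using Rel_block by blast
  then show False using Rel_full_contra[of h] c3 by simp
qed

lemma partA: assumes "card \<Omega> > 2" "map_rank \<Omega> f = 2" shows "synchronizes \<Omega> G f"
proof (rule ccontr)
  assume ns: "\<not> synchronizes \<Omega> G f"
  obtain h where h: "h \<in> S" "\<forall>t\<in>S. card (h ` \<Omega>) \<le> card (t ` \<Omega>)" using exmin by blast
  have "card (h ` \<Omega>) \<le> 2" using h(2) Sf assms(2) unfolding map_rank_def by metis
  moreover have "card (h ` \<Omega>) \<noteq> 1" using const h(1) ns by blast
  moreover have "card (h ` \<Omega>) \<noteq> 2" using no_rank2 h assms(1) by blast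
  ultimately show False using rank_pos[of h] by simp
qed

lemma partB: assumes "card \<Omega> > 2" "map_rank \<Omega> f \<in> {3, 4}" "\<not> uniform_map \<Omega> f"
  shows "synchronizes \<Omega> G f"
proof (rule ccontr)
  assume ns: "\<not> synchronizes \<Omega> G f"
  obtain h where h: "h \<in> S" "\<forall>t\<in>S. card (h ` \<Omega>) \<le> card (t ` \<Omega>)" using exmin by blast
  have le: "card (h ` \<Omega>) \<le> card (f ` \<Omega>)" using h(2) Sf by blast
  moreover have "card (h ` \<Omega>) \<noteq> 1" using const h(1) ns by blast
  moreover have "card (h ` \<Omega>) \<noteq> 2" using no_rank2 h assms(1) by blast
  moreover have "card (h ` \<Omega>) \<noteq> card (f ` \<Omega>)"
  proof
    assume "card (h ` \<Omega>) = card (f ` \<Omega>)"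
    then have "\<forall>t\<in>S. card (f ` \<Omega>) \<le> card (t ` \<Omega>)" using h(2) by simp
    then show False using min_uniform assms(3) by blast
  qed
  moreover have "\<not> (card (h ` \<Omega>) = 3 \<and> card (f ` \<Omega>) = 4)" using no_rank4 h by blast
  ultimately show False using rank_pos[of h] assms(2) unfolding map_rank_def by auto
qed

end

theorem theorem4:
  fixes \<Omega> :: "'a set" and G :: "('a \<Rightarrow> 'a) set"
  assumes "finite \<Omega>" and "card \<Omega> > 2" and "primitive_on \<Omega> G"
  shows "(\<forall>f. is_map_on \<Omega> f \<and> map_rank \<Omega> f = 2 \<longrightarrow> synchronizes \<Omega> G f)
       \<and> (\<forall>f. is_map_on \<Omega> f \<and> map_rank \<Omega> f \<in> {3, 4} \<and> \<not> uniform_map \<Omega> f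
              \<longrightarrow> synchronizes \<Omega> G f)"
proof -
  have ne: "\<Omega> \<noteq> {}" using assms(2) by auto
  show ?thesis
  proof (intro conjI allI impI)
    fix f assume "is_map_on \<Omega> f \<and> map_rank \<Omega> f = 2"
    then interpret ctx \<Omega> G f using assms ne by unfold_locales auto
    show "synchronizes \<Omega> G f" using partA assms \<open>is_map_on \<Omega> f \<and> map_rank \<Omega> f = 2\<close> by blast
  next
    fix f assume a: "is_map_on \<Omega> f \<and> map_rank \<Omega> f \<in> {3, 4} \<and> \<not> uniform_map \<Omega> f"
    then interpret ctx \<Omega> G f using assms ne by unfold_locales auto
    show "synchronizes \<Omega> G f" using partB assms a by blast
  qed
qed

end
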